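(* Let $G$ be the infinite king grid. The code $C=\{(x,y)\in\mathbb{Z}^2\mid x-y\equiv 0\pmod 3\}$ is self-locating-dominating in $G$ and its density is $1/3$.
   Context: The infinite king grid $G=(V,E)$ has $V=\mathbb{Z}^2$, and distinct vertices $(u_1,u_2)$, $(v_1,v_2)$ are adjacent iff $|u_1-v_1|\le1$ and $|u_2-v_2|\le1$. Let $V_n=\{(x,y)\mid |x|\le n,|y|\le n\}$; the density of a code $C\subseteq V$ is $D(C)=\limsup_{n\to\infty}|C\cap V_n|/|V_n|$. $N[v]$ is the closed neighbourhood of $v$, and for a code $C$, $I(C;v)=N[v]\cap C$. A code $C$ is self-locating-dominating if for every $u\in V\setminus C$, $I(C;u)\ne\emptyset$ and $\bigcap_{c\in I(C;u)}N[c]=\{u\}$. *)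

theory Defs
  imports "HOL-Library.Liminf_Limsup" "HOL-Library.Extended_Real"
begin

type_synonym vertex = "int \<times> int"

definition king_adj :: "vertex \<Rightarrow> vertex \<Rightarrow> bool" where
  "king_adj u v \<longleftrightarrow> u \<noteq> v \<and> \<bar>fst u - fst v\<bar> \<le> 1 \<and> \<bar>snd u - snd v\<bar> \<le> 1"

definition closed_nbhd :: "vertex \<Rightarrow> vertex set" where
  "closed_nbhd v = {v} \<union> {u. king_adj v u}"

definition I_set :: "vertex set \<Rightarrow> vertex \<Rightarrow> vertex set" where
  "I_set C v = closed_nbhd v \<inter> C"

definition self_locating_dominating :: "vertex set \<Rightarrow> bool" where
  "self_locating_dominating C \<longleftrightarrow>
     (\<forall>u. u \<notin> C \<longrightarrow> I_set C u \<noteq> {} \<and> (\<Inter>c\<in>I_set C u. closed_nbhd c) = {u})"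

definition V_box :: "nat \<Rightarrow> vertex set" where
  "V_box n = {(x, y). \<bar>x\<bar> \<le> int n \<and> \<bar>y\<bar> \<le> int n}"

definition density :: "vertex set \<Rightarrow> ereal" where
  "density C = limsup (\<lambda>n. ereal (real (card (C \<inter> V_box n)) / real (card (V_box n))))"

end

theory Submission
  imports Defs
begin

lemma mem_nbhd: "(x,y) \<in> closed_nbhd (a,b) \<longleftrightarrow> \<bar>x-a\<bar> \<le> 1 \<and> \<bar>y-b\<bar> \<le> 1"
  unfolding closed_nbhd_def king_adj_def by auto

lemma sld:
  "self_locating_dominating {(x::int, y::int). (x - y) mod 3 = 0}"
  unfolding self_locating_dominating_def
proof (intro allI impI)
  fix u :: vertex
  let ?C = "{(x::int, y::int). (x - y) mod 3 = 0}"
  assume u: "u \<notin> ?C"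
  obtain a b where ab: "u = (a,b)" by force
  have "(a-b) mod 3 = 1 \<or> (a-b) mod 3 = 2" using u ab by auto
  then show "I_set ?C u \<noteq> {} \<and> (\<Inter>c\<in>I_set ?C u. closed_nbhd c) = {u}"
  proof
    assume h: "(a-b) mod 3 = 1"
    have I: "I_set ?C (a,b) = {(a,b+1),(a-1,b),(a+1,b-1)}"
    proof (rule set_eqI)
      fix p :: vertex obtain x y where p: "p = (x,y)" by force
      show "p \<in> I_set ?C (a,b) \<longleftrightarrow> p \<in> {(a,b+1),(a-1,b),(a+1,b-1)}"
        using h by (simp add: I_set_def ab p mem_nbhd abs_le_iff) presburger
    qed
    show ?thesis unfolding ab I
      by (auto simp: mem_nbhd)
  next
    assume h: "(a-b) mod 3 = 2"
    have I: "I_set ?C (a,b) = {(a+1,b),(a,b-1),(a-1,b+1)}"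
    proof (rule set_eqI)
      fix p :: vertex obtain x y where p: "p = (x,y)" by force
      show "p \<in> I_set ?C (a,b) \<longleftrightarrow> p \<in> {(a+1,b),(a,b-1),(a-1,b+1)}"
        using h by (simp add: I_set_def ab p mem_nbhd abs_le_iff) presburger
    qed
    show ?thesis unfolding ab I
      by (auto simp: mem_nbhd)
  qed
qed


lemma img_sub:
  fixes x :: int and n :: nat
  shows "(\<lambda>y. (x - y) div 3) ` {y \<in> {-int n..int n}. (x-y) mod 3 = 0} \<subseteq> {(x - int n + 2) div 3..(x + int n) div 3}"
proof (rule image_subsetI)
  fix y assume "y \<in> {y \<in> {-int n..int n}. (x-y) mod 3 = 0}"
  then have y1: "-int n \<le> y" "y \<le> int n" and y2: "(x-y) mod 3 = 0" by auto
  define k where "k = (x - y) div 3"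
  have k: "x - y = 3*k" using y2 div_mult_mod_eq[of "x-y" 3] unfolding k_def by linarith
  have l1: "x - int n + 2 \<le> 3*k+2" using y1 k by linarith
  have "(x - int n + 2) div 3 \<le> (3*k+2) div 3" by (rule zdiv_mono1[OF l1]) simp
  moreover have "(3*k+2) div 3 = k" by simp
  moreover have l2: "3*k \<le> x + int n" using y1 k by linarith
  moreover have "(3*k) div 3 \<le> (x + int n) div 3" by (rule zdiv_mono1[OF l2]) simp
  ultimately show "(x - y) div 3 \<in> {(x - int n + 2) div 3..(x + int n) div 3}" unfolding k_def[symmetric] by simp
qed

lemma col_card:
  fixes n :: nat and x :: int
  shows "card {y \<in> {-int n..int n}. (x-y) mod 3 = 0} = nat ((x + int n) div 3 - (x - int n + 2) div 3 + 1)"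
proof -
  let ?a = "(x - int n + 2) div 3" and ?b = "(x + int n) div 3"
  have "bij_betw (\<lambda>k. x - 3*k) {?a..?b} {y \<in> {-int n..int n}. (x-y) mod 3 = 0}"
  proof (rule bij_betw_byWitness[where f' = "\<lambda>y. (x - y) div 3"])
    show "(\<lambda>k. x - 3*k) ` {?a..?b} \<subseteq> {y \<in> {-int n..int n}. (x-y) mod 3 = 0}"
    proof (rule image_subsetI)
      fix k assume k: "k \<in> {?a..?b}"
      have b1: "3 * ?b \<le> x + int n" and a2: "3 * ?a \<ge> x - int n" by linarith+
      have "?a \<le> k" "k \<le> ?b" using k by auto
      then have "- int n \<le> x - 3*k" "x - 3*k \<le> int n" using a2 b1 by linarith+
      then show "x - 3*k \<in> {y \<in> {-int n..int n}. (x-y) mod 3 = 0}" by simp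
    qed
    show "(\<lambda>y. (x - y) div 3) ` {y \<in> {-int n..int n}. (x-y) mod 3 = 0} \<subseteq> {?a..?b}"
      by (rule img_sub)
    show "\<forall>k\<in>{?a..?b}. (x - (x - 3*k)) div 3 = k" by simp
    show "\<forall>y\<in>{y \<in> {-int n..int n}. (x-y) mod 3 = 0}. x - 3 * ((x - y) div 3) = y"
    proof
      fix y assume "y \<in> {y \<in> {-int n..int n}. (x-y) mod 3 = 0}"
      then have y2: "(x-y) mod 3 = 0" by simp
      show "x - 3 * ((x - y) div 3) = y" using y2 div_mult_mod_eq[of "x-y" 3] by linarith
    qed
  qed
  then have "card {y \<in> {-int n..int n}. (x-y) mod 3 = 0} = card {?a..?b}"
    by (rule bij_betw_same_card[symmetric])
  then show ?thesis by simp
qed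

lemma col_bounds:
  fixes n :: nat and x :: int
  shows "2 * real n - 1 \<le> 3 * real (card {y \<in> {-int n..int n}. (x-y) mod 3 = 0})"
    and "3 * real (card {y \<in> {-int n..int n}. (x-y) mod 3 = 0}) \<le> 2 * real n + 3"
proof -
  let ?a = "(x - int n + 2) div 3" and ?b = "(x + int n) div 3"
  have b1: "3 * ?b \<ge> x + int n - 2" and b2: "3 * ?b \<le> x + int n" by linarith+
  have a1: "3 * ?a \<le> x - int n + 2" and a2: "3 * ?a \<ge> x - int n" by linarith+
  have nn: "?b - ?a + 1 \<ge> 0" using a1 b1 by linarith
  have eq: "real (card {y \<in> {-int n..int n}. (x-y) mod 3 = 0}) = real_of_int (?b - ?a + 1)"
    unfolding col_card using nn by simp
  have d: "3 * (?b - ?a + 1) = 3 * ?b - 3 * ?a + 3" by simp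
  have i1: "2 * int n - 1 \<le> 3 * (?b - ?a + 1)" unfolding d using a1 b1 by linarith
  have i2: "3 * (?b - ?a + 1) \<le> 2 * int n + 3" unfolding d using a2 b2 by linarith
  have i1': "real_of_int (2 * int n - 1) \<le> real_of_int (3 * (?b - ?a + 1))" using i1 by (simp only: of_int_le_iff)
  have i2': "real_of_int (3 * (?b - ?a + 1)) \<le> real_of_int (2 * int n + 3)" using i2 by (simp only: of_int_le_iff)
  show "2 * real n - 1 \<le> 3 * real (card {y \<in> {-int n..int n}. (x-y) mod 3 = 0})"
    unfolding eq using i1' by simp
  show "3 * real (card {y \<in> {-int n..int n}. (x-y) mod 3 = 0}) \<le> 2 * real n + 3"
    unfolding eq using i2' by simp
qed

lemma box_card: "card (V_box n) = (2*n+1)^2"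
proof -
  have "V_box n = {-int n..int n} \<times> {-int n..int n}" unfolding V_box_def by auto
  moreover have "card {-int n..int n} = 2*n+1" by simp
  ultimately show ?thesis by (simp add: card_cartesian_product power2_eq_square)
qed

lemma code_card:
  fixes n :: nat
  defines "C \<equiv> {(x::int, y::int). (x - y) mod 3 = 0}"
  shows "real (2*n+1) * (2 * real n - 1) \<le> 3 * real (card (C \<inter> V_box n))"
    and "3 * real (card (C \<inter> V_box n)) \<le> real (2*n+1) * (2 * real n + 3)"
proof -
  let ?B = "\<lambda>x. {y \<in> {-int n..int n}. (x-y) mod 3 = 0}"
  have fin: "finite (?B x)" for x by (rule finite_subset[of _ "{-int n..int n}"]) auto
  have "C \<inter> V_box n = Sigma {-int n..int n} ?B" unfolding C_def V_box_def by auto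
  then have "card (C \<inter> V_box n) = card (Sigma {-int n..int n} ?B)" by simp
  also have "\<dots> = (\<Sum>x\<in>{-int n..int n}. card (?B x))"
    by (rule card_SigmaI) (simp, use fin in blast)
  finally have "card (C \<inter> V_box n) = (\<Sum>x\<in>{-int n..int n}. card (?B x))" .
  then have e: "3 * real (card (C \<inter> V_box n)) = (\<Sum>x\<in>{-int n..int n}. 3 * real (card (?B x)))"
    by (simp add: sum_distrib_left)
  have cd: "card {-int n..int n} = 2*n+1" by simp
  have "(\<Sum>x\<in>{-int n..int n}. 2 * real n - 1) \<le> (\<Sum>x\<in>{-int n..int n}. 3 * real (card (?B x)))"
    by (rule sum_mono) (rule col_bounds(1))
  then show "real (2*n+1) * (2 * real n - 1) \<le> 3 * real (card (C \<inter> V_box n))"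
    by (simp only: e sum_constant cd)
  have "(\<Sum>x\<in>{-int n..int n}. 3 * real (card (?B x))) \<le> (\<Sum>x\<in>{-int n..int n}. 2 * real n + 3)"
    by (rule sum_mono) (rule col_bounds(2))
  then show "3 * real (card (C \<inter> V_box n)) \<le> real (2*n+1) * (2 * real n + 3)"
    by (simp only: e sum_constant cd)
qed

lemma canc: "s \<noteq> 0 \<Longrightarrow> 2*s/(3*s^2) = 2/(3*(s::real))"
  by (simp add: power2_eq_square)

lemma dens:
  "density {(x::int, y::int). (x - y) mod 3 = 0} = ereal (1/3)"
proof -
  define C where "C = {(x::int, y::int). (x - y) mod 3 = 0}"
  define g where "g n = real (card (C \<inter> V_box n)) / real (card (V_box n))" for n
  have bnd: "\<bar>g n - 1/3\<bar> \<le> inverse (real (Suc n))" for n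
  proof -
    have pos: "real (2*n+1) > 0" by simp
    have gd: "g n = real (card (C \<inter> V_box n)) / (real (2*n+1))^2"
      unfolding g_def box_card by simp
    have l: "real (2*n+1) * (2 * real n - 1) \<le> 3 * real (card (C \<inter> V_box n))"
      and u: "3 * real (card (C \<inter> V_box n)) \<le> real (2*n+1) * (2 * real n + 3)"
      using code_card[of n] unfolding C_def by (simp_all add: algebra_simps)
    define m where "m = real n"
    have m0: "m \<ge> 0" unfolding m_def by simp
    define c where "c = real (card (C \<inter> V_box n))"
    have l': "(2*m+1) * (2*m-1) \<le> 3*c" and u': "3*c \<le> (2*m+1)*(2*m+3)"
      using l u unfolding m_def c_def by (simp_all add: algebra_simps)
    have gd': "g n = c / (2*m+1)^2" unfolding gd m_def c_def by simp
    have "\<bar>c / (2*m+1)^2 - 1/3\<bar> \<le> 1 / (m+1)"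
    proof -
      have p: "(2*m+1)^2 > 0" using m0 by simp
      have "2*m+1 \<noteq> 0" using m0 by simp
      have "\<bar>3*c - (2*m+1)^2\<bar> \<le> 2*(2*m+1)" using l' u' by (simp add: power2_eq_square algebra_simps abs_le_iff)
      then have "\<bar>c / (2*m+1)^2 - 1/3\<bar> = \<bar>3*c - (2*m+1)^2\<bar> / (3*(2*m+1)^2)"
        using p by (simp add: field_simps abs_div)
      also have "\<dots> \<le> 2*(2*m+1) / (3*(2*m+1)^2)"
        using \<open>\<bar>3*c - (2*m+1)^2\<bar> \<le> 2*(2*m+1)\<close> p by (simp add: divide_right_mono)
      also have "\<dots> = 2 / (3*(2*m+1))" using canc[OF \<open>2*m+1 \<noteq> 0\<close>] .
      also have "\<dots> \<le> 1/(m+1)" using m0 by (simp add: field_simps)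
      finally show ?thesis .
    qed
    then show ?thesis unfolding gd' m_def by (simp add: inverse_eq_divide add.commute)
  qed
  have "g \<longlonglongrightarrow> 1/3"
  proof (rule tendsto_sandwich[where f = "\<lambda>n. 1/3 - inverse (real (Suc n))" and h = "\<lambda>n. 1/3 + inverse (real (Suc n))"])
    show "\<forall>\<^sub>F n in sequentially. 1/3 - inverse (real (Suc n)) \<le> g n"
      using bnd by (auto simp: abs_le_iff intro!: always_eventually) (smt (verit) bnd abs_le_iff)
    show "\<forall>\<^sub>F n in sequentially. g n \<le> 1/3 + inverse (real (Suc n))"
      using bnd by (auto simp: abs_le_iff intro!: always_eventually) (smt (verit) bnd abs_le_iff)
    show "(\<lambda>n. 1/3 - inverse (real (Suc n))) \<longlonglongrightarrow> 1/3"
      using tendsto_diff[OF tendsto_const LIMSEQ_inverse_real_of_nat, of "1/3::real"] by simp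
    show "(\<lambda>n. 1/3 + inverse (real (Suc n))) \<longlonglongrightarrow> 1/3"
      using tendsto_add[OF tendsto_const LIMSEQ_inverse_real_of_nat, of "1/3::real"] by simp
  qed
  then have "(\<lambda>n. ereal (g n)) \<longlonglongrightarrow> ereal (1/3)" by (rule tendsto_ereal)
  then have "limsup (\<lambda>n. ereal (g n)) = ereal (1/3)"
    by (simp add: lim_imp_Limsup)
  then show ?thesis unfolding density_def g_def C_def .
qed

theorem theorem12:
  defines "C \<equiv> {(x::int, y::int). (x - y) mod 3 = 0}"
  shows "self_locating_dominating C \<and> density C = ereal (1/3)"
  unfolding C_def using sld dens by blast

end
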